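(* Let $D$ be a vertex-transitive digraph and let $u\in VD$. Then the subdigraph induced by $\mathrm{desc}(u)$ is a tree if and only if the subdigraph induced by $\mathrm{anc}(u)$ is a tree.
   Context: A digraph is a set with an irreflexive antisymmetric arc relation $\to$. $\mathrm{desc}(u)$ is the set of vertices $v$ for which there is a directed path from $u$ to $v$; $\mathrm{anc}(u)$ is the set of vertices $v$ such that $u\in\mathrm{desc}(v)$. A digraph is called a tree if its underlying undirected graph is a tree. Vertex-transitive: the automorphism group acts transitively on vertices. *)

theory Defs
  imports Main
begin

definition digraph :: "'a set \<Rightarrow> ('a \<times> 'a) set \<Rightarrow> bool" where
  "digraph V A \<longleftrightarrow> A \<subseteq> V \<times> V \<and> irrefl A \<and> antisym A"

definition desc :: "('a \<times> 'a) set \<Rightarrow> 'a \<Rightarrow> 'a set" where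
  "desc A u = {v. (u, v) \<in> A\<^sup>*}"

definition anc :: "('a \<times> 'a) set \<Rightarrow> 'a \<Rightarrow> 'a set" where
  "anc A u = {v. u \<in> desc A v}"

definition digraph_aut :: "'a set \<Rightarrow> ('a \<times> 'a) set \<Rightarrow> ('a \<Rightarrow> 'a) \<Rightarrow> bool" where
  "digraph_aut V A f \<longleftrightarrow> bij_betw f V V \<and>
     (\<forall>x\<in>V. \<forall>y\<in>V. (x, y) \<in> A \<longleftrightarrow> (f x, f y) \<in> A)"

definition vertex_transitive :: "'a set \<Rightarrow> ('a \<times> 'a) set \<Rightarrow> bool" where
  "vertex_transitive V A \<longleftrightarrow> (\<forall>x\<in>V. \<forall>y\<in>V. \<exists>f. digraph_aut V A f \<and> f x = y)"

definition induced_arcs :: "('a \<times> 'a) set \<Rightarrow> 'a set \<Rightarrow> ('a \<times> 'a) set" where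
  "induced_arcs A S = A \<inter> (S \<times> S)"

definition has_cycle :: "'a set \<Rightarrow> ('a \<times> 'a) set \<Rightarrow> bool" where
  "has_cycle S E \<longleftrightarrow> (\<exists>xs. length xs \<ge> 3 \<and> distinct xs \<and> set xs \<subseteq> S \<and>
      (\<forall>i<length xs. (xs ! i, xs ! ((i + 1) mod length xs)) \<in> E))"

definition ugraph_tree :: "'a set \<Rightarrow> ('a \<times> 'a) set \<Rightarrow> bool" where
  "ugraph_tree S E \<longleftrightarrow> S \<noteq> {} \<and>
     (\<forall>x\<in>S. \<forall>y\<in>S. (x, y) \<in> (E \<inter> (S \<times> S))\<^sup>*) \<and> \<not> has_cycle S E"

definition digraph_tree :: "'a set \<Rightarrow> ('a \<times> 'a) set \<Rightarrow> bool" where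
  "digraph_tree S B \<longleftrightarrow> ugraph_tree S (B \<union> B\<inverse>)"

end

theory Submission
  imports Defs
begin

lemma rt_restrict:
  assumes "(a,c) \<in> A\<^sup>*" and "\<And>v. (v,c) \<in> A\<^sup>* \<Longrightarrow> v \<in> S"
  shows "(a,c) \<in> (A \<inter> S \<times> S)\<^sup>*"
  using assms(1)
proof (induction rule: converse_rtrancl_induct)
  case base then show ?case by simp
next
  case (step y z)
  have "y \<in> S" using assms(2) step(1,2) by (meson converse_rtrancl_into_rtrancl)
  moreover have "z \<in> S" using assms(2) step(2) by blast
  ultimately show ?case using step by (meson IntI SigmaI converse_rtrancl_into_rtrancl)
qed

lemma rt_restrict_fwd:
  assumes "(a,c) \<in> A\<^sup>*" and "\<And>v. (a,v) \<in> A\<^sup>* \<Longrightarrow> v \<in> S"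
  shows "(a,c) \<in> (A \<inter> S \<times> S)\<^sup>*"
  using assms(1)
proof (induction rule: rtrancl_induct)
  case base then show ?case by simp
next
  case (step y z)
  have "z \<in> S" using assms(2) step(1,2) by (meson rtrancl_into_rtrancl)
  moreover have "y \<in> S" using assms(2) step(1) by blast
  ultimately show ?case using step by (meson IntI SigmaI rtrancl_into_rtrancl)
qed

lemma dpath:
  assumes "(a,c) \<in> R\<^sup>*"
  shows "\<exists>ps. ps \<noteq> [] \<and> hd ps = a \<and> last ps = c \<and> distinct ps \<and>
     (\<forall>i. Suc i < length ps \<longrightarrow> (ps!i, ps!Suc i) \<in> R)"
  using assms
proof (induction rule: rtrancl_induct)
  case base
  show ?case by (rule exI[of _ "[a]"]) simp
next
  case (step b c)
  then obtain ps where ps: "ps \<noteq> []" "hd ps = a" "last ps = b" "distinct ps"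
    "\<forall>i. Suc i < length ps \<longrightarrow> (ps!i, ps!Suc i) \<in> R" by blast
  show ?case
  proof (cases "c \<in> set ps")
    case True
    then obtain k where k: "k < length ps" "ps!k = c" by (meson in_set_conv_nth)
    let ?qs = "take (Suc k) ps"
    have "?qs \<noteq> []" using ps(1) by simp
    moreover have "hd ?qs = a" using ps(1,2) by (simp add: hd_take)
    moreover have "last ?qs = c" using k by (simp add: take_Suc_conv_app_nth)
    moreover have "distinct ?qs" using ps(4) by simp
    moreover have "\<forall>i. Suc i < length ?qs \<longrightarrow> (?qs!i, ?qs!Suc i) \<in> R"
      using ps(5) by auto
    ultimately show ?thesis by blast
  next
    case False
    let ?qs = "ps @ [c]"
    have "\<forall>i. Suc i < length ?qs \<longrightarrow> (?qs!i, ?qs!Suc i) \<in> R"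
    proof (intro allI impI)
      fix i assume i: "Suc i < length ?qs"
      show "(?qs!i, ?qs!Suc i) \<in> R"
      proof (cases "Suc i < length ps")
        case True then show ?thesis using ps(5) by (simp add: nth_append)
      next
        case False
        then have "i = length ps - 1" using i by simp
        then have "?qs!i = b" "?qs!Suc i = c" using ps(1,3) False i
          by (auto simp: nth_append last_conv_nth)
        then show ?thesis using step(2) by simp
      qed
    qed
    then show ?thesis using ps False by (intro exI[of _ ?qs]) (auto simp: hd_append)
  qed
qed


lemma cycI:
  assumes dg: "digraph V A" and b: "b \<in> desc A w" and bw: "(b,w) \<in> A"
  shows "has_cycle (anc A w) (induced_arcs A (anc A w) \<union> (induced_arcs A (anc A w))\<inverse>)"
proof -
  let ?S = "anc A w"
  let ?B = "induced_arcs A ?S"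
  have wb: "(w,b) \<in> A\<^sup>*" using b by (simp add: desc_def)
  have inS: "v \<in> ?S" if "(v,b) \<in> A\<^sup>*" for v
    using that bw by (simp add: anc_def desc_def)
  have "(w,b) \<in> (A \<inter> ?S \<times> ?S)\<^sup>*" by (rule rt_restrict[OF wb inS])
  then obtain ps where ps: "ps \<noteq> []" "hd ps = w" "last ps = b" "distinct ps"
    "\<forall>i. Suc i < length ps \<longrightarrow> (ps!i, ps!Suc i) \<in> A \<inter> ?S \<times> ?S"
    using dpath[OF \<open>(w,b) \<in> (A \<inter> ?S \<times> ?S)\<^sup>*\<close>] by metis
  have irr: "irrefl A" and as: "antisym A" using dg by (auto simp: digraph_def)
  have "b \<noteq> w" using irr bw by (auto simp: irrefl_def)
  have h0: "ps!0 = w" using ps by (simp add: hd_conv_nth)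
  have hl: "ps!(length ps - 1) = b" using ps by (simp add: last_conv_nth)
  have len: "length ps \<ge> 3"
  proof (rule ccontr)
    assume "\<not> 3 \<le> length ps"
    moreover have "length ps \<noteq> 1" using h0 hl \<open>b \<noteq> w\<close> by auto
    moreover have "length ps \<noteq> 0" using ps by simp
    ultimately have "length ps = 2" by linarith
    then have "(w,b) \<in> A" using ps(5) h0 hl by (metis One_nat_def diff_Suc_1 lessI numeral_2_eq_2 IntD1)
    then show False using as bw \<open>b \<noteq> w\<close> by (auto simp: antisym_def)
  qed
  have setS: "set ps \<subseteq> ?S"
  proof
    fix v assume "v \<in> set ps"
    then obtain i where i: "i < length ps" "ps!i = v" by (meson in_set_conv_nth)
    show "v \<in> ?S"
    proof (cases "Suc i < length ps")
      case True then have "(ps!i, ps!Suc i) \<in> A \<inter> ?S \<times> ?S" using ps(5) by blast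
      then show ?thesis using i by auto
    next
      case False then have "i = length ps - 1" using i by simp
      then show ?thesis using hl i inS by auto
    qed
  qed
  have "\<forall>i<length ps. (ps ! i, ps ! ((i + 1) mod length ps)) \<in> ?B \<union> ?B\<inverse>"
  proof (intro allI impI)
    fix i assume i: "i < length ps"
    show "(ps ! i, ps ! ((i + 1) mod length ps)) \<in> ?B \<union> ?B\<inverse>"
    proof (cases "Suc i < length ps")
      case True then show ?thesis using ps(5) by (simp add: induced_arcs_def)
    next
      case False then have "i = length ps - 1" using i by simp
      moreover have "i + 1 = length ps" using \<open>i = length ps - 1\<close> i by simp
      then have "(i + 1) mod length ps = 0" by simp
      ultimately have "ps!i = b" "ps ! ((i + 1) mod length ps) = w" using hl h0 by auto
      moreover have "b \<in> ?S" "w \<in> ?S" using inS by (auto simp: anc_def desc_def)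
      ultimately show ?thesis using bw by (simp add: induced_arcs_def)
    qed
  qed
  then show ?thesis unfolding has_cycle_def using len ps(4) setS by (intro exI[of _ ps]) simp
qed

lemma cycII:
  assumes noI: "\<forall>b\<in>desc A w. (b,w) \<notin> A" and xw: "(x,w) \<in> A" and yw: "(y,w) \<in> A"
    and xy: "x \<noteq> y" and rx: "(r,x) \<in> A\<^sup>*" and ry: "(r,y) \<in> A\<^sup>*"
  shows "has_cycle (anc A w) (induced_arcs A (anc A w) \<union> (induced_arcs A (anc A w))\<inverse>)"
proof -
  let ?S = "anc A w"
  let ?S' = "anc A w - {w}"
  let ?B = "induced_arcs A ?S"
  let ?R = "(A \<inter> ?S' \<times> ?S') \<union> (A \<inter> ?S' \<times> ?S')\<inverse>"
  have inS: "v \<in> ?S'" if "(v,z) \<in> A\<^sup>*" "(z,w) \<in> A" for v z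
  proof -
    have "v \<in> ?S" using that by (simp add: anc_def desc_def)
    moreover have "v \<noteq> w" using that noI by (auto simp: desc_def)
    ultimately show ?thesis by simp
  qed
  have "(r,x) \<in> (A \<inter> ?S' \<times> ?S')\<^sup>*" by (rule rt_restrict[OF rx]) (rule inS[OF _ xw])
  then have "(r,x) \<in> ?R\<^sup>*" by (meson Un_upper1 rtrancl_mono subsetD)
  then have "(x,r) \<in> (?R\<inverse>)\<^sup>*" by (simp add: rtrancl_converse)
  moreover have "?R\<inverse> = ?R" by auto
  ultimately have xr: "(x,r) \<in> ?R\<^sup>*" by simp
  have "(r,y) \<in> (A \<inter> ?S' \<times> ?S')\<^sup>*" by (rule rt_restrict[OF ry]) (rule inS[OF _ yw])
  then have "(r,y) \<in> ?R\<^sup>*" by (meson Un_upper1 rtrancl_mono subsetD)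
  with xr have "(x,y) \<in> ?R\<^sup>*" by simp
  then obtain ps where ps: "ps \<noteq> []" "hd ps = x" "last ps = y" "distinct ps"
    "\<forall>i. Suc i < length ps \<longrightarrow> (ps!i, ps!Suc i) \<in> ?R"
    using dpath[OF \<open>(x,y) \<in> ?R\<^sup>*\<close>] by metis
  have h0: "ps!0 = x" using ps by (simp add: hd_conv_nth)
  have hl: "ps!(length ps - 1) = y" using ps by (simp add: last_conv_nth)
  have len: "length ps \<ge> 2"
  proof (rule ccontr)
    assume "\<not> 2 \<le> length ps"
    then have "length ps = 1" using ps(1) by (cases ps) (auto simp: Suc_le_eq)
    then show False using h0 hl xy by auto
  qed
  have yS: "y \<in> ?S'" using inS[OF _ yw] by blast
  have setS: "set ps \<subseteq> ?S'"
  proof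
    fix v assume "v \<in> set ps"
    then obtain i where i: "i < length ps" "ps!i = v" by (meson in_set_conv_nth)
    show "v \<in> ?S'"
    proof (cases "Suc i < length ps")
      case True then have "(ps!i, ps!Suc i) \<in> ?R" using ps(5) by blast
      then show ?thesis using i by auto
    next
      case False then have "i = length ps - 1" using i by simp
      then show ?thesis using hl i yS by auto
    qed
  qed
  let ?zs = "ps @ [w]"
  have wS: "w \<in> ?S" by (simp add: anc_def desc_def)
  have "\<forall>i<length ?zs. (?zs ! i, ?zs ! ((i + 1) mod length ?zs)) \<in> ?B \<union> ?B\<inverse>"
  proof (intro allI impI)
    fix i assume i: "i < length ?zs"
    consider "Suc i < length ps" | "i = length ps - 1" | "i = length ps" using i by (cases "Suc i < length ps"; cases "i = length ps"; auto)
    then show "(?zs ! i, ?zs ! ((i + 1) mod length ?zs)) \<in> ?B \<union> ?B\<inverse>"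
    proof cases
      case 1
      then have "(?zs ! i, ?zs ! ((i + 1) mod length ?zs)) = (ps!i, ps!Suc i)"
        by (simp add: nth_append)
      moreover have "?R \<subseteq> ?B \<union> ?B\<inverse>" by (auto simp: induced_arcs_def)
      ultimately show ?thesis using ps(5) 1 by auto
    next
      case 2
      then have "(?zs ! i, ?zs ! ((i + 1) mod length ?zs)) = (y, w)"
        using hl len ps(1) by (simp add: nth_append)
      then show ?thesis using yw yS wS by (simp add: induced_arcs_def)
    next
      case 3
      then have "(?zs ! i, ?zs ! ((i + 1) mod length ?zs)) = (w, x)"
        using h0 len ps(1) by (simp add: nth_append)
      moreover have "x \<in> ?S'" using setS h0 ps(1) by (metis hd_in_set ps(2) subsetD)
      ultimately show ?thesis using xw wS by (simp add: induced_arcs_def)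
    qed
  qed
  moreover have "distinct ?zs" using ps(4) setS by auto
  moreover have "set ?zs \<subseteq> ?S" using setS wS by auto
  moreover have "length ?zs \<ge> 3" using len by simp
  ultimately show ?thesis unfolding has_cycle_def by (intro exI[of _ ?zs]) simp
qed


lemma nocyc_desc:
  assumes noI: "\<forall>b\<in>desc A u. (b,u) \<notin> A"
  and noII: "\<And>w x y. x \<in> desc A u \<Longrightarrow> y \<in> desc A u \<Longrightarrow> (x,w) \<in> A \<Longrightarrow> (y,w) \<in> A \<Longrightarrow> x = y"
  shows "\<not> has_cycle (desc A u) (induced_arcs A (desc A u) \<union> (induced_arcs A (desc A u))\<inverse>)"
proof
  let ?S = "desc A u"
  let ?B = "induced_arcs A ?S"
  define d where "d v = (LEAST n. (u,v) \<in> A ^^ n)" for v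
  have d1: "(u,v) \<in> A ^^ (d v)" if "v \<in> ?S" for v
  proof -
    have "\<exists>n. (u,v) \<in> A ^^ n" using that by (simp add: desc_def rtrancl_power)
    then show ?thesis unfolding d_def by (rule LeastI_ex)
  qed
  have d2: "d v \<le> n" if "(u,v) \<in> A ^^ n" for v n
    unfolding d_def using that by (rule Least_le)
  have d3: "d v = Suc (d a)" if av: "(a,v) \<in> A" and a: "a \<in> ?S" for a v
  proof -
    have vS: "v \<in> ?S" using av a by (simp add: desc_def)
    have "v \<noteq> u" using noI av a by auto
    have uv: "(u,v) \<in> A ^^ (d v)" using d1[OF vS] .
    have "d v \<noteq> 0" using uv \<open>v \<noteq> u\<close> by (metis relpow_0_E)
    then obtain m where dv: "d v = Suc m" by (cases "d v") auto
    with uv obtain z where uz: "(u,z) \<in> A ^^ m" and zv: "(z,v) \<in> A"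
      by (metis relpow_Suc_E)
    have "z \<in> ?S" using uz by (simp add: desc_def relpow_imp_rtrancl)
    then have "z = a" using noII zv av a by blast
    then have "d a \<le> m" using d2 uz by blast
    moreover have "(u,v) \<in> A ^^ Suc (d a)" using d1[OF a] av by (rule relpow_Suc_I)
    then have "d v \<le> Suc (d a)" using d2 by blast
    ultimately show ?thesis using dv by simp
  qed
  assume "has_cycle ?S (?B \<union> ?B\<inverse>)"
  then obtain xs where xs: "length xs \<ge> 3" "distinct xs" "set xs \<subseteq> ?S"
    "\<forall>i<length xs. (xs ! i, xs ! ((i + 1) mod length xs)) \<in> ?B \<union> ?B\<inverse>"
    unfolding has_cycle_def by blast
  define n where "n = length xs"
  define M where "M = Max (d ` set xs)"
  have fin: "finite (d ` set xs)" by simp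
  have ne: "d ` set xs \<noteq> {}" using xs(1) by auto
  have "M \<in> d ` set xs" unfolding M_def using fin ne by (rule Max_in)
  then obtain v where "v \<in> set xs" "d v = M" by auto
  then obtain i where i: "i < n" "d (xs!i) = M" unfolding n_def by (metis in_set_conv_nth)
  have ge: "d (xs!k) \<le> M" if "k < n" for k
    unfolding M_def using fin that n_def by (simp add: Max_ge)
  have inS: "xs!k \<in> ?S" if "k < n" for k using xs(3) that n_def by auto
  have K: "(xs!k, xs!i) \<in> A" if k: "k < n" and e: "(xs!i, xs!k) \<in> ?B \<union> ?B\<inverse> \<or> (xs!k, xs!i) \<in> ?B \<union> ?B\<inverse>" for k
  proof -
    have "(xs!i, xs!k) \<in> A \<or> (xs!k, xs!i) \<in> A" using e by (auto simp: induced_arcs_def)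
    moreover have "(xs!i, xs!k) \<notin> A"
    proof
      assume "(xs!i, xs!k) \<in> A"
      then have "d (xs!k) = Suc M" using d3 inS i by metis
      then show False using ge[OF k] by simp
    qed
    ultimately show ?thesis by blast
  qed
  define k1 where "k1 = (i + 1) mod n"
  define k2 where "k2 = (if i = 0 then n - 1 else i - 1)"
  have n3: "n \<ge> 3" using xs(1) n_def by simp
  have k1n: "k1 < n" unfolding k1_def using n3 by simp
  have k2n: "k2 < n" unfolding k2_def using n3 i by auto
  have k2i: "(k2 + 1) mod n = i" unfolding k2_def using n3 i by auto
  have e1: "(xs!i, xs!k1) \<in> ?B \<union> ?B\<inverse>" using xs(4) i unfolding k1_def n_def by blast
  have e2: "(xs!k2, xs!i) \<in> ?B \<union> ?B\<inverse>" using xs(4) k2n k2i unfolding n_def by metis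
  have a1: "(xs!k1, xs!i) \<in> A" using K[OF k1n] e1 by blast
  have a2: "(xs!k2, xs!i) \<in> A" using K[OF k2n] e2 by blast
  have "xs!k1 = xs!k2" using noII[OF inS[OF k1n] inS[OF k2n] a1 a2] .
  then have "k1 = k2" using xs(2) k1n k2n n_def by (simp add: nth_eq_iff_index_eq)
  moreover have "k1 \<noteq> k2"
  proof (cases "i = 0")
    case True then show ?thesis unfolding k1_def k2_def using n3 by auto
  next
    case False
    show ?thesis
    proof (cases "i = n - 1")
      case True then have "k1 = 0" unfolding k1_def using n3 by simp
      then show ?thesis unfolding k2_def using n3 True False by auto
    next
      case F2: False
      then have "k1 = i + 1" unfolding k1_def using i by simp
      then show ?thesis unfolding k2_def using False by auto
    qed
  qed
  ultimately show False by simp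
qed


lemma transfer:
  assumes dg: "digraph V A" and f: "digraph_aut V A f" and wV: "w \<in> V"
    and cyc: "has_cycle (anc A w) (induced_arcs A (anc A w) \<union> (induced_arcs A (anc A w))\<inverse>)"
  shows "has_cycle (anc A (f w)) (induced_arcs A (anc A (f w)) \<union> (induced_arcs A (anc A (f w)))\<inverse>)"
proof -
  have AV: "A \<subseteq> V \<times> V" using dg by (simp add: digraph_def)
  have bij: "bij_betw f V V" and arc: "\<And>x y. x \<in> V \<Longrightarrow> y \<in> V \<Longrightarrow> (x,y) \<in> A \<longleftrightarrow> (f x, f y) \<in> A"
    using f by (auto simp: digraph_aut_def)
  have ancV: "v \<in> V" if "v \<in> anc A w" for v
  proof -
    have "(v,w) \<in> A\<^sup>*" using that by (simp add: anc_def desc_def)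
    then show ?thesis
    proof (cases rule: converse_rtranclE)
      case base then show ?thesis using wV by simp
    next
      case (step z) then show ?thesis using AV by auto
    qed
  qed
  have rt: "(f p, f q) \<in> A\<^sup>*" if "(p,q) \<in> A\<^sup>*" "p \<in> V" for p q
    using that(1)
  proof (induction rule: rtrancl_induct)
    case base then show ?case by simp
  next
    case (step y z)
    then have "y \<in> V" "z \<in> V" using AV by auto
    then have "(f y, f z) \<in> A" using arc step(2) by blast
    with step(3) show ?case by (rule rtrancl_into_rtrancl)
  qed
  have ancf: "f v \<in> anc A (f w)" if "v \<in> anc A w" for v
    using rt[of v w] that ancV by (simp add: anc_def desc_def)
  obtain xs where xs: "length xs \<ge> 3" "distinct xs" "set xs \<subseteq> anc A w"
    "\<forall>i<length xs. (xs ! i, xs ! ((i + 1) mod length xs)) \<in>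
       induced_arcs A (anc A w) \<union> (induced_arcs A (anc A w))\<inverse>"
    using cyc unfolding has_cycle_def by blast
  have inj: "inj_on f (set xs)"
    using bij_betw_imp_inj_on[OF bij] xs(3) ancV by (meson inj_on_subset subsetI subsetD)
  let ?ys = "map f xs"
  have "\<forall>i<length ?ys. (?ys ! i, ?ys ! ((i + 1) mod length ?ys)) \<in>
       induced_arcs A (anc A (f w)) \<union> (induced_arcs A (anc A (f w)))\<inverse>"
  proof (intro allI impI)
    fix i assume i: "i < length ?ys"
    let ?j = "(i + 1) mod length xs"
    have j: "?j < length xs" using xs(1) by (intro mod_less_divisor) linarith
    have a: "xs!i \<in> anc A w" "xs!?j \<in> anc A w" using xs(3) i j by auto
    have "(xs!i, xs!?j) \<in> A \<or> (xs!?j, xs!i) \<in> A" using xs(4) i by (auto simp: induced_arcs_def)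
    then have "(f (xs!i), f (xs!?j)) \<in> A \<or> (f (xs!?j), f (xs!i)) \<in> A"
      using arc a ancV by blast
    then show "(?ys ! i, ?ys ! ((i + 1) mod length ?ys)) \<in>
       induced_arcs A (anc A (f w)) \<union> (induced_arcs A (anc A (f w)))\<inverse>"
      using i j ancf[OF a(1)] ancf[OF a(2)] by (auto simp: induced_arcs_def)
  qed
  moreover have "distinct ?ys" using xs(2) inj by (simp add: distinct_map)
  moreover have "set ?ys \<subseteq> anc A (f w)" using xs(3) ancf by auto
  moreover have "length ?ys \<ge> 3" using xs(1) by simp
  ultimately show ?thesis unfolding has_cycle_def by (intro exI[of _ ?ys]) simp
qed

lemma main:
  assumes dg: "digraph V A" and vt: "vertex_transitive V A" and u: "u \<in> V"
    and cyc: "has_cycle (desc A u) (induced_arcs A (desc A u) \<union> (induced_arcs A (desc A u))\<inverse>)"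
  shows "has_cycle (anc A u) (induced_arcs A (anc A u) \<union> (induced_arcs A (anc A u))\<inverse>)"
proof -
  have AV: "A \<subseteq> V \<times> V" using dg by (simp add: digraph_def)
  have key: "has_cycle (anc A u) (induced_arcs A (anc A u) \<union> (induced_arcs A (anc A u))\<inverse>)"
    if "w \<in> V" "has_cycle (anc A w) (induced_arcs A (anc A w) \<union> (induced_arcs A (anc A w))\<inverse>)" for w
  proof -
    obtain f where "digraph_aut V A f" "f w = u" using vt \<open>w \<in> V\<close> u unfolding vertex_transitive_def by blast
    then show ?thesis using transfer[OF dg _ that(1,2)] by metis
  qed
  show ?thesis
  proof (cases "\<exists>w\<in>V. \<exists>b\<in>desc A w. (b,w) \<in> A")
    case True
    then obtain w b where "w \<in> V" "b \<in> desc A w" "(b,w) \<in> A" by blast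
    then show ?thesis using key cycI[OF dg] by blast
  next
    case False
    then have noI: "\<forall>b\<in>desc A w. (b,w) \<notin> A" for w using AV by blast
    show ?thesis
    proof (cases "\<exists>w x y. x \<in> desc A u \<and> y \<in> desc A u \<and> (x,w) \<in> A \<and> (y,w) \<in> A \<and> x \<noteq> y")
      case True
      then obtain w x y where h: "x \<in> desc A u" "y \<in> desc A u" "(x,w) \<in> A" "(y,w) \<in> A" "x \<noteq> y"
        by blast
      then have "w \<in> V" using AV by auto
      moreover have "has_cycle (anc A w) (induced_arcs A (anc A w) \<union> (induced_arcs A (anc A w))\<inverse>)"
        using cycII[OF noI h(3,4,5)] h(1,2) by (simp add: desc_def)
      ultimately show ?thesis using key by blast
    next
      case False
      then have "\<not> has_cycle (desc A u) (induced_arcs A (desc A u) \<union> (induced_arcs A (desc A u))\<inverse>)"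
        using nocyc_desc[of A u] noI by blast
      then show ?thesis using cyc by blast
    qed
  qed
qed

lemma conn:
  assumes "(p,q) \<in> (A \<inter> S \<times> S)\<^sup>*"
  shows "(p,q) \<in> ((induced_arcs A S \<union> (induced_arcs A S)\<inverse>) \<inter> S \<times> S)\<^sup>* \<and>
         (q,p) \<in> ((induced_arcs A S \<union> (induced_arcs A S)\<inverse>) \<inter> S \<times> S)\<^sup>*"
proof -
  let ?R = "(induced_arcs A S \<union> (induced_arcs A S)\<inverse>) \<inter> S \<times> S"
  have sub: "A \<inter> S \<times> S \<subseteq> ?R" by (auto simp: induced_arcs_def)
  have 1: "(p,q) \<in> ?R\<^sup>*" using assms rtrancl_mono[OF sub] by blast
  have "?R\<inverse> = ?R" by auto
  then have "(q,p) \<in> ?R\<^sup>*" using 1 by (metis rtrancl_converseI)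
  with 1 show ?thesis by blast
qed

lemma tree_desc:
  "digraph_tree (desc A u) (induced_arcs A (desc A u)) \<longleftrightarrow>
   \<not> has_cycle (desc A u) (induced_arcs A (desc A u) \<union> (induced_arcs A (desc A u))\<inverse>)"
proof -
  let ?S = "desc A u"
  let ?R = "(induced_arcs A ?S \<union> (induced_arcs A ?S)\<inverse>) \<inter> ?S \<times> ?S"
  have uS: "u \<in> ?S" by (simp add: desc_def)
  have c: "(u,x) \<in> (A \<inter> ?S \<times> ?S)\<^sup>*" if "x \<in> ?S" for x
    using that by (intro rt_restrict_fwd) (auto simp: desc_def)
  have "(x,y) \<in> ?R\<^sup>*" if "x \<in> ?S" "y \<in> ?S" for x y
    using conn[OF c[OF that(1)]] conn[OF c[OF that(2)]] by (meson rtrancl_trans)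
  then show ?thesis unfolding digraph_tree_def ugraph_tree_def using uS by blast
qed

lemma tree_anc:
  "digraph_tree (anc A u) (induced_arcs A (anc A u)) \<longleftrightarrow>
   \<not> has_cycle (anc A u) (induced_arcs A (anc A u) \<union> (induced_arcs A (anc A u))\<inverse>)"
proof -
  let ?S = "anc A u"
  let ?R = "(induced_arcs A ?S \<union> (induced_arcs A ?S)\<inverse>) \<inter> ?S \<times> ?S"
  have uS: "u \<in> ?S" by (simp add: anc_def desc_def)
  have c: "(x,u) \<in> (A \<inter> ?S \<times> ?S)\<^sup>*" if "x \<in> ?S" for x
    using that by (intro rt_restrict) (auto simp: anc_def desc_def)
  have "(x,y) \<in> ?R\<^sup>*" if "x \<in> ?S" "y \<in> ?S" for x y
    using conn[OF c[OF that(1)]] conn[OF c[OF that(2)]] by (meson rtrancl_trans)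
  then show ?thesis unfolding digraph_tree_def ugraph_tree_def using uS by blast
qed

theorem lemma3p3:
  fixes V :: "'a set" and A :: "('a \<times> 'a) set" and u :: 'a
  assumes "digraph V A" and "vertex_transitive V A" and "u \<in> V"
  shows "digraph_tree (desc A u) (induced_arcs A (desc A u)) \<longleftrightarrow>
         digraph_tree (anc A u) (induced_arcs A (anc A u))"
proof -
  have dg': "digraph V (A\<inverse>)" using assms(1)
    by (auto simp: digraph_def irrefl_def antisym_def)
  have "digraph_aut V (A\<inverse>) f = digraph_aut V A f" for f
    by (auto simp: digraph_aut_def)
  then have vt': "vertex_transitive V (A\<inverse>)" using assms(2)
    by (simp add: vertex_transitive_def)
  have de: "desc (A\<inverse>) u = anc A u" by (auto simp: desc_def anc_def rtrancl_converse)
  have an: "anc (A\<inverse>) u = desc A u" by (auto simp: desc_def anc_def rtrancl_converse)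
  have ia: "induced_arcs (A\<inverse>) S = (induced_arcs A S)\<inverse>" for S by (auto simp: induced_arcs_def)
  have 1: "has_cycle (desc A u) (induced_arcs A (desc A u) \<union> (induced_arcs A (desc A u))\<inverse>)
      \<Longrightarrow> has_cycle (anc A u) (induced_arcs A (anc A u) \<union> (induced_arcs A (anc A u))\<inverse>)"
    using main[OF assms] .
  have 2: "has_cycle (anc A u) (induced_arcs A (anc A u) \<union> (induced_arcs A (anc A u))\<inverse>)
      \<Longrightarrow> has_cycle (desc A u) (induced_arcs A (desc A u) \<union> (induced_arcs A (desc A u))\<inverse>)"
    using main[OF dg' vt' assms(3)] unfolding de an ia by (simp add: Un_commute)
  show ?thesis unfolding tree_desc tree_anc using 1 2 by blast
qed

end
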